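(* Let $q$ be an odd prime and $a\in(\mathbb{Z}/q\mathbb{Z})^\times$. (i) If $q\ne5$, or if $q=5$ and $a\ne 3+5\mathbb{Z}$, then there exists $x\in(\mathbb{Z}/q\mathbb{Z})^\times$ such that $\left(\frac{x+a/x}{q}\right)\ne1$. (ii) If $q\notin\{7,13\}$, then there exists $x\in(\mathbb{Z}/q\mathbb{Z})^\times$ such that $\left(\frac{x^6+a}{q}\right)\ne1$.
   Context: $\left(\frac{\cdot}{q}\right)$ denotes the Legendre symbol modulo $q$ (taking value $0$ on the zero class). *)

theory Defs
  imports "HOL-Number_Theory.Number_Theory"
begin

end

theory Submission
  imports Defs
begin

context
  fixes q :: int
  assumes qp: "prime q" and q2: "q > 2"
begin

lemma q0: "q > 0" using q2 by simp

lemma leg_cong: "[m = n] (mod q) \<Longrightarrow> Legendre m q = Legendre n q"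
  unfolding Legendre_def QuadRes_def
  by (smt (verit, ccfv_SIG) cong_sym cong_trans)

lemma leg_mod: "Legendre (m mod q) q = Legendre m q"
  by (rule leg_cong) (simp add: cong_def)

lemma leg_vals: "Legendre n q = 1 \<or> Legendre n q = 0 \<or> Legendre n q = -1"
  by (simp add: Legendre_def)

lemma leg_zero: "Legendre n q = 0 \<longleftrightarrow> q dvd n"
  by (auto simp: Legendre_def cong_0_iff)

lemma leg_unit: "\<not> q dvd n \<Longrightarrow> Legendre n q = 1 \<or> Legendre n q = -1"
  using leg_vals[of n] leg_zero[of n] by auto

lemma euler_int: "[Legendre a q = a ^ nat ((q - 1) div 2)] (mod q)"
proof -
  have qn: "q = int (nat q)" using q2 by simp
  have p: "prime (nat q)" using qp by simp
  have "2 < nat q" using q2 by simp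
  from euler_criterion[OF p this, of a] have e: "[Legendre a (int (nat q)) = a ^ ((nat q - 1) div 2)] (mod int (nat q))" .
  have k: "(nat q - 1) div 2 = nat ((q - 1) div 2)" using q2 by (simp add: nat_div_distrib nat_diff_distrib')
  show ?thesis using e unfolding k by (simp only: flip: qn)
qed

lemma leg_mult: "Legendre (m*n) q = Legendre m q * Legendre n q"
proof -
  let ?k = "nat ((q - 1) div 2)"
  have e1: "[Legendre (m*n) q = (m*n)^?k] (mod q)" using euler_int .
  have "[Legendre m q * Legendre n q = m^?k * n^?k] (mod q)"
    using euler_int[of m] euler_int[of n] by (rule cong_mult)
  hence "[Legendre (m*n) q = Legendre m q * Legendre n q] (mod q)"
    using e1 by (metis cong_sym cong_trans power_mult_distrib)
  hence d: "q dvd (Legendre (m*n) q - Legendre m q * Legendre n q)"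
    by (simp add: cong_iff_dvd_diff cong_sym_eq)
  have "\<bar>Legendre (m*n) q - Legendre m q * Legendre n q\<bar> \<le> 2"
    using leg_vals[of "m*n"] leg_vals[of m] leg_vals[of n] by auto
  moreover have "Legendre (m*n) q - Legendre m q * Legendre n q = 0"
  proof (rule ccontr)
    assume "Legendre (m*n) q - Legendre m q * Legendre n q \<noteq> 0"
    from dvd_imp_le_int[OF this d] have "\<bar>q\<bar> \<le> \<bar>Legendre (m*n) q - Legendre m q * Legendre n q\<bar>" .
    with calculation q2 show False by linarith
  qed
  ultimately show ?thesis by simp
qed

lemma prime_dvd_sq: "q dvd x^n \<Longrightarrow> q dvd x"
  using qp prime_dvd_power by blast

lemma leg_sq: "\<not> q dvd x \<Longrightarrow> Legendre (x^2) q = 1"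
  using prime_dvd_sq[of x 2] by (auto simp: Legendre_def QuadRes_def cong_0_iff intro: cong_refl)

lemma leg_one: "Legendre 1 q = 1"
  using leg_sq[of 1] q2 by (simp add: zdvd1_eq)

lemma leg_pow: "Legendre (x^k) q = Legendre x q ^ k"
  by (induction k) (simp_all add: leg_mult leg_one)

lemma leg_pow_even: "\<not> q dvd x \<Longrightarrow> Legendre (x^(2*k)) q = 1"
proof -
  assume "\<not> q dvd x"
  hence "Legendre x q ^ 2 = 1" using leg_unit[of x] by auto
  thus ?thesis by (simp add: leg_pow power_mult)
qed


lemma unit_inv: "\<not> q dvd x \<Longrightarrow> \<exists>y. [x*y = 1] (mod q)"
  using cong_solve_coprime_int qp prime_imp_coprime coprime_commute by blast

lemma modeq: "x \<in> {0..<q} \<Longrightarrow> y \<in> {0..<q} \<Longrightarrow> [x = y] (mod q) \<Longrightarrow> x = y"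
  by (simp add: cong_def)

lemma R_dvd: "x \<in> {0..<q} \<Longrightarrow> q dvd x \<longleftrightarrow> x = 0"
  using zdvd_imp_le[of q x] by (cases "x = 0") auto

lemma U_ndvd: "x \<in> {1..<q} \<Longrightarrow> \<not> q dvd x"
  using zdvd_imp_le[of q x] by auto

lemma R_split: "{0..<q} = insert 0 {1..<q}" using q2 by auto

lemma mod_in_R: "x mod q \<in> {0..<q}" using q0 by simp

lemma mod_in_U: "\<not> q dvd x \<Longrightarrow> x mod q \<in> {1..<q}"
proof -
  assume "\<not> q dvd x"
  hence "x mod q \<noteq> 0" by (simp add: dvd_eq_mod_eq_0)
  moreover have "x mod q \<ge> 0" "x mod q < q" using q0 by auto
  ultimately show ?thesis by auto
qed

lemma mul_inj: "\<not> q dvd c \<Longrightarrow> inj_on (\<lambda>x. c*x mod q) {0..<q}"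
proof (rule inj_onI)
  fix x y assume c: "\<not> q dvd c" and x: "x \<in> {0..<q}" and y: "y \<in> {0..<q}" and e: "c * x mod q = c * y mod q"
  have "coprime c q" using c qp prime_imp_coprime coprime_commute by blast
  hence "[x = y] (mod q)" using e cong_mult_lcancel unfolding cong_def by blast
  thus "x = y" using modeq x y by blast
qed

lemma mul_bij_R: "\<not> q dvd c \<Longrightarrow> bij_betw (\<lambda>x. c*x mod q) {0..<q} {0..<q}"
proof -
  assume c: "\<not> q dvd c"
  have "(\<lambda>x. c*x mod q) ` {0..<q} \<subseteq> {0..<q}" using mod_in_R by auto
  thus ?thesis unfolding bij_betw_def using mul_inj[OF c] endo_inj_surj[of "{0..<q}" "\<lambda>x. c*x mod q"] by auto
qed

lemma mul_bij_U: "\<not> q dvd c \<Longrightarrow> bij_betw (\<lambda>x. c*x mod q) {1..<q} {1..<q}"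
proof -
  assume c: "\<not> q dvd c"
  have i: "inj_on (\<lambda>x. c*x mod q) {1..<q}" using mul_inj[OF c] by (rule inj_on_subset) auto
  have "(\<lambda>x. c*x mod q) ` {1..<q} \<subseteq> {1..<q}"
  proof
    fix z assume "z \<in> (\<lambda>x. c*x mod q) ` {1..<q}"
    then obtain x where x: "x \<in> {1..<q}" and z: "z = c*x mod q" by auto
    have "\<not> q dvd c*x" using c U_ndvd[OF x] qp by (simp add: prime_dvd_mult_iff)
    thus "z \<in> {1..<q}" using z mod_in_U by blast
  qed
  thus ?thesis unfolding bij_betw_def using i endo_inj_surj[of "{1..<q}"] by auto
qed

lemma shift_bij: "bij_betw (\<lambda>x. (x+u) mod q) {0..<q} {0..<q}"
proof -
  have "inj_on (\<lambda>x. (x+u) mod q) {0..<q}"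
  proof (rule inj_onI)
    fix x y assume x: "x \<in> {0..<q}" and y: "y \<in> {0..<q}" and e: "(x+u) mod q = (y+u) mod q"
    hence "[x = y] (mod q)" by (metis cong_add_rcancel cong_def)
    thus "x = y" using modeq x y by blast
  qed
  moreover have "(\<lambda>x. (x+u) mod q) ` {0..<q} \<subseteq> {0..<q}" using mod_in_R by auto
  ultimately show ?thesis unfolding bij_betw_def using endo_inj_surj[of "{0..<q}" "\<lambda>x. (x+u) mod q"] by auto
qed

lemma nonsquare: "\<exists>g. \<not> q dvd g \<and> Legendre g q = -1"
proof -
  define p where "p = nat q"
  define k where "k = (p - 1) div 2"
  have pp: "prime p" using qp by (simp add: p_def)
  have p3: "p \<ge> 3" using q2 p_def by simp
  have k0: "k > 0" using p3 k_def by simp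
  let ?A = "{x\<in>{..<p}. [x ^ k = 1] (mod p)}"
  have cA: "card ?A \<le> k" using roots_mod_prime_bound[OF pp k0] by simp
  have "card ?A < card {1..<p}" using cA p3 k_def by simp
  have "\<not> {1..<p} \<subseteq> ?A"
  proof
    assume "{1..<p} \<subseteq> ?A"
    moreover have "finite ?A" by simp
    ultimately have "card {1..<p} \<le> card ?A" by (rule card_mono[rotated])
    thus False using \<open>card ?A < card {1..<p}\<close> by simp
  qed
  then obtain x where x1: "x \<in> {1..<p}" and xA: "x \<notin> ?A" by blast
  hence nx: "\<not> [x ^ k = 1] (mod p)" by auto
  have ndvd: "\<not> q dvd int x"
  proof
    assume "q dvd int x"
    moreover have "q = int p" using p_def q0 by simp
    ultimately have "p dvd x" using int_dvd_int_iff by metis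
    thus False using x1 by (auto dest: dvd_imp_le)
  qed
  have "Legendre (int x) q \<noteq> 1"
  proof
    assume "Legendre (int x) q = 1"
    hence "[1 = int x ^ nat ((q - 1) div 2)] (mod q)" using euler_int[of "int x"] by simp
    moreover have "nat ((q - 1) div 2) = k" using k_def p_def q2 by (simp add: nat_div_distrib nat_diff_distrib')
    ultimately have "[int (x ^ k) = int 1] (mod int p)" using p_def q0 by (simp add: cong_sym_eq)
    thus False using nx cong_int_iff by blast
  qed
  thus ?thesis using ndvd leg_unit by blast
qed

lemma sum_leg_R: "(\<Sum>r\<in>{0..<q}. Legendre r q) = 0"
proof -
  obtain g where g: "\<not> q dvd g" "Legendre g q = -1" using nonsquare by blast
  have "(\<Sum>r\<in>{0..<q}. Legendre r q) = (\<Sum>r\<in>{0..<q}. Legendre (g*r mod q) q)"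
    using sum.reindex_bij_betw[OF mul_bij_R[OF g(1)], of "\<lambda>r. Legendre r q"] by simp
  also have "\<dots> = (\<Sum>r\<in>{0..<q}. - Legendre r q)" by (simp add: leg_mod leg_mult g(2))
  also have "\<dots> = - (\<Sum>r\<in>{0..<q}. Legendre r q)" by (rule sum_negf)
  finally have "(\<Sum>r\<in>{0..<q}. Legendre r q) = - (\<Sum>r\<in>{0..<q}. Legendre r q)" .
  thus ?thesis by (metis equal_neg_zero)
qed

lemma leg0: "Legendre 0 q = 0" by (simp add: leg_zero)

lemma sum_RU: "(\<Sum>r\<in>{0..<q}. f r) = f 0 + (\<Sum>r\<in>{1..<q}. f r)"
proof -
  have "(\<Sum>r\<in>{0..<q}. f r) = (\<Sum>r\<in>insert 0 {1..<q}. f r)" by (simp only: R_split)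
  also have "\<dots> = f 0 + (\<Sum>r\<in>{1..<q}. f r)" by (rule sum.insert) auto
  finally show ?thesis .
qed

lemma sum_leg_U: "(\<Sum>r\<in>{1..<q}. Legendre r q) = 0"
  using sum_leg_R sum_RU[of "\<lambda>r. Legendre r q"] leg0 by simp

lemma sum_L6: assumes d: "\<not> q dvd d"
  shows "(\<Sum>a\<in>{0..<q}. Legendre (a*(a+d)) q) = -1"
proof -
  define iv where "iv a = (SOME y. [a*y=1] (mod q))" for a
  have iv: "[a * iv a = 1] (mod q)" if "a \<in> {1..<q}" for a
    unfolding iv_def using unit_inv[OF U_ndvd[OF that]] by (rule someI_ex)
  define h where "h a = (1 + d * iv a) mod q" for a
  have eq: "Legendre (a*(a+d)) q = Legendre (h a) q" if a: "a \<in> {1..<q}" for a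
  proof -
    have "[a^2 + d*a*1 = a^2 + d*a*(a*iv a)] (mod q)"
      using iv[OF a] by (intro cong_add cong_mult cong_refl) (simp add: cong_sym)
    hence "[a*(a+d) = a^2 * (1 + d * iv a)] (mod q)"
      by (simp add: algebra_simps power2_eq_square)
    hence "Legendre (a*(a+d)) q = Legendre (a^2 * (1 + d * iv a)) q" by (rule leg_cong)
    also have "\<dots> = Legendre (1 + d * iv a) q" using leg_mult leg_sq[OF U_ndvd[OF a]] by simp
    finally show ?thesis by (simp add: h_def leg_mod)
  qed
  have hR: "h a \<in> {0..<q} - {1}" if a: "a \<in> {1..<q}" for a
  proof -
    have "h a \<noteq> 1"
    proof
      assume "h a = 1"
      hence "[1 + d * iv a = 1 + 0] (mod q)" using q2 by (simp add: h_def cong_def)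
      hence "[d * iv a = 0] (mod q)" using cong_add_lcancel by blast
      hence "q dvd d * iv a" by (simp add: cong_0_iff)
      hence "q dvd iv a" using d qp by (simp add: prime_dvd_mult_iff)
      hence "q dvd a * iv a" by simp
      hence "[a * iv a = 0] (mod q)" by (simp add: cong_0_iff)
      hence "[1 = 0] (mod q)" using iv[OF a] cong_sym cong_trans by blast
      hence "q dvd 1" by (simp add: cong_0_iff)
      thus False using q2 by (simp add: zdvd1_eq)
    qed
    thus ?thesis using mod_in_R h_def by auto
  qed
  have hinj: "inj_on h {1..<q}"
  proof (rule inj_onI)
    fix a b assume a: "a \<in> {1..<q}" and b: "b \<in> {1..<q}" and e: "h a = h b"
    hence "[1 + d * iv a = 1 + d * iv b] (mod q)" by (simp add: h_def cong_def)
    hence "[d * iv a = d * iv b] (mod q)" using cong_add_lcancel by blast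
    moreover have "coprime d q" using d qp prime_imp_coprime coprime_commute by blast
    ultimately have ii: "[iv a = iv b] (mod q)" using cong_mult_lcancel by blast
    have "[a = a * (b * iv b)] (mod q)" using iv[OF b] by (metis cong_scalar_left cong_sym mult.right_neutral)
    also have "[a * (b * iv b) = b * (a * iv b)] (mod q)" by (simp add: algebra_simps cong_refl)
    also have "[b * (a * iv b) = b * (a * iv a)] (mod q)" using ii by (simp add: cong_scalar_left cong_sym)
    also have "[b * (a * iv a) = b * 1] (mod q)" using iv[OF a] by (rule cong_scalar_left)
    finally have "[a = b] (mod q)" by simp
    thus "a = b" using modeq a b by auto
  qed
  have img: "h ` {1..<q} = {0..<q} - {1}"
  proof (rule card_subset_eq)
    show "h ` {1..<q} \<subseteq> {0..<q} - {1}" using hR by auto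
    have "card (h ` {1..<q}) = nat (q - 1)" using card_image[OF hinj] by simp
    also have "\<dots> = card ({0..<q} - {1})" using q2 by simp
    finally show "card (h ` {1..<q}) = card ({0..<q} - {1})" .
  qed simp
  have "(\<Sum>a\<in>{0..<q}. Legendre (a*(a+d)) q) = (\<Sum>a\<in>{1..<q}. Legendre (a*(a+d)) q)"
    using sum_RU[of "\<lambda>a. Legendre (a*(a+d)) q"] leg0 by simp
  also have "\<dots> = (\<Sum>a\<in>{1..<q}. Legendre (h a) q)" using eq by (rule sum.cong[OF refl])
  also have "\<dots> = (\<Sum>r\<in>h ` {1..<q}. Legendre r q)" using sum.reindex[OF hinj, of "\<lambda>r. Legendre r q"] by simp
  also have "\<dots> = (\<Sum>r\<in>{0..<q}. Legendre r q) - Legendre 1 q" using img q2 by (simp add: sum_diff1)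
  finally show ?thesis using sum_leg_R leg_one by simp
qed

lemma sum_L7: "(\<Sum>a\<in>{0..<q}. Legendre ((a+u)*(a+v)) q) = (if [u = v] (mod q) then q - 1 else -1)"
proof -
  define G where "G b = Legendre (b*(b+(v-u))) q" for b
  have "(\<Sum>a\<in>{0..<q}. Legendre ((a+u)*(a+v)) q) = (\<Sum>a\<in>{0..<q}. G ((a+u) mod q))"
  proof (rule sum.cong[OF refl])
    fix a
    have "[((a+u) mod q) * ((a+u) mod q + (v-u)) = (a+u) * ((a+u) + (v-u))] (mod q)"
      by (intro cong_mult cong_add cong_refl) (simp_all add: cong_def)
    hence "[(a+u)*(a+v) = ((a+u) mod q) * ((a+u) mod q + (v-u))] (mod q)"
      by (simp add: cong_sym_eq)
    thus "Legendre ((a+u)*(a+v)) q = G ((a+u) mod q)" unfolding G_def by (rule leg_cong)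
  qed
  also have "\<dots> = (\<Sum>b\<in>{0..<q}. G b)"
    using sum.reindex_bij_betw[OF shift_bij[of u], of G] by simp
  finally have e: "(\<Sum>a\<in>{0..<q}. Legendre ((a+u)*(a+v)) q) = (\<Sum>b\<in>{0..<q}. G b)" .
  show ?thesis
  proof (cases "[u = v] (mod q)")
    case False
    hence "\<not> q dvd (v - u)" by (simp add: cong_iff_dvd_diff cong_sym_eq dvd_diff_commute)
    from sum_L6[OF this] show ?thesis using e False unfolding G_def by simp
  next
    case True
    hence dv: "q dvd (v - u)" by (simp add: cong_iff_dvd_diff cong_sym_eq dvd_diff_commute)
    have G1: "G b = 1" if b: "b \<in> {1..<q}" for b
    proof -
      have "[b*(b+(v-u)) = b^2] (mod q)"
      proof -
        have "[b*(b+(v-u)) = b*(b+0)] (mod q)" using dv by (intro cong_mult cong_add cong_refl) (simp add: cong_0_iff)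
        thus ?thesis by (simp add: power2_eq_square)
      qed
      thus ?thesis unfolding G_def using leg_cong leg_sq[OF U_ndvd[OF b]] by simp
    qed
    have "(\<Sum>b\<in>{0..<q}. G b) = G 0 + (\<Sum>b\<in>{1..<q}. G b)" by (rule sum_RU)
    also have "\<dots> = q - 1" using G1 leg0 q2 by (simp add: G_def)
    finally show ?thesis using e True by simp
  qed
qed

lemma roots_bound: assumes n: "n > 0" shows "card {y\<in>{1..<q}. [y^n = c] (mod q)} \<le> n"
proof -
  define p where "p = nat q"
  have pp: "prime p" using qp by (simp add: p_def)
  have qp': "q = int p" using p_def q0 by simp
  let ?A = "{x\<in>{..<p}. [x ^ n = nat (c mod q)] (mod p)}"
  have cA: "card ?A \<le> n" using roots_mod_prime_bound[OF pp n] by simp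
  have sub: "{y\<in>{1..<q}. [y^n = c] (mod q)} \<subseteq> int ` ?A"
  proof
    fix y assume y: "y \<in> {y\<in>{1..<q}. [y^n = c] (mod q)}"
    hence y1: "y = int (nat y)" and yl: "nat y < p" using p_def by auto
    have "[y^n = c mod q] (mod q)" using y by (simp add: cong_def)
    hence "[int (nat y ^ n) = int (nat (c mod q))] (mod int p)"
      using y1 q0 qp' by (metis of_nat_power pos_mod_sign nat_0_le order_less_imp_le)
    hence "[nat y ^ n = nat (c mod q)] (mod p)" using cong_int_iff by blast
    hence "nat y \<in> ?A" using yl by simp
    thus "y \<in> int ` ?A" using y1 by blast
  qed
  have "card {y\<in>{1..<q}. [y^n = c] (mod q)} \<le> card (int ` ?A)"
    by (rule card_mono[OF _ sub]) simp
  also have "\<dots> \<le> card ?A" by (rule card_image_le) simp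
  finally show ?thesis using cA by linarith
qed

lemma fiber_card: assumes a: "\<not> q dvd a0" and n: "n > 0"
  shows "card {1..<q} \<le> n * card ((\<lambda>l. l^n*a0 mod q) ` {1..<q})"
proof -
  let ?f = "\<lambda>l. l^n*a0 mod q"
  let ?A = "?f ` {1..<q}"
  have cop: "coprime a0 q" using a qp prime_imp_coprime coprime_commute by blast
  have "{1..<q} \<subseteq> (\<Union>b\<in>?A. {l\<in>{1..<q}. ?f l = b})" by auto
  hence "card {1..<q} \<le> card (\<Union>b\<in>?A. {l\<in>{1..<q}. ?f l = b})"
    by (intro card_mono) (auto intro: finite_subset[of _ "{1..<q}"])
  also have "\<dots> \<le> (\<Sum>b\<in>?A. card {l\<in>{1..<q}. ?f l = b})" by (rule card_UN_le) simp
  also have "\<dots> \<le> (\<Sum>b\<in>?A. n)"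
  proof (rule sum_mono)
    fix b assume "b \<in> ?A"
    then obtain m where m: "m \<in> {1..<q}" "b = ?f m" by auto
    have "{l\<in>{1..<q}. ?f l = b} \<subseteq> {y\<in>{1..<q}. [y^n = m^n] (mod q)}"
    proof
      fix l assume "l \<in> {l\<in>{1..<q}. ?f l = b}"
      hence l: "l \<in> {1..<q}" and e: "[a0 * l^n = a0 * m^n] (mod q)" using m by (auto simp: cong_def mult.commute)
      from e cop have "[l^n = m^n] (mod q)" using cong_mult_lcancel by blast
      thus "l \<in> {y\<in>{1..<q}. [y^n = m^n] (mod q)}" using l by simp
    qed
    hence "card {l\<in>{1..<q}. ?f l = b} \<le> card {y\<in>{1..<q}. [y^n = m^n] (mod q)}"
      by (intro card_mono) (auto intro: finite_subset[of _ "{1..<q}"])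
    also have "\<dots> \<le> n" by (rule roots_bound[OF n])
    finally show "card {l\<in>{1..<q}. ?f l = b} \<le> n" .
  qed
  also have "\<dots> = n * card ?A" by simp
  finally show ?thesis .
qed

lemma kernel_bound: assumes w: "\<And>x y. w x y \<le> 1" and n: "n > 0"
  shows "(\<Sum>x\<in>{1..<q}. \<Sum>y\<in>{1..<q}. w x y * (if [x^n = y^n] (mod q) then q else 0)) \<le> int n * q * (q - 1)"
proof -
  have "(\<Sum>x\<in>{1..<q}. \<Sum>y\<in>{1..<q}. w x y * (if [x^n = y^n] (mod q) then q else 0))
      \<le> (\<Sum>x\<in>{1..<q}. \<Sum>y\<in>{1..<q}. (if [y^n = x^n] (mod q) then q else 0))"
  proof (intro sum_mono)
    fix x y
    show "w x y * (if [x^n = y^n] (mod q) then q else 0) \<le> (if [y^n = x^n] (mod q) then q else 0)"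
      using w[of x y] q0 by (auto simp: cong_sym_eq)
  qed
  also have "\<dots> = (\<Sum>x\<in>{1..<q}. q * int (card {y\<in>{1..<q}. [y^n = x^n] (mod q)}))"
  proof (rule sum.cong[OF refl])
    fix x
    have "(\<Sum>y\<in>{1..<q}. (if [y^n = x^n] (mod q) then q else 0)) = (\<Sum>y\<in>{y\<in>{1..<q}. [y^n = x^n] (mod q)}. q)"
      by (rule sum.inter_filter[symmetric]) simp
    also have "\<dots> = of_nat (card {y\<in>{1..<q}. [y^n = x^n] (mod q)}) * q" by (rule sum_constant)
    finally show "(\<Sum>y\<in>{1..<q}. (if [y^n = x^n] (mod q) then q else 0)) = q * int (card {y\<in>{1..<q}. [y^n = x^n] (mod q)})"
      by (simp only: mult.commute)
  qed
  also have "\<dots> \<le> (\<Sum>x\<in>{1..<q}. q * int n)"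
    using roots_bound[OF n] q0 by (intro sum_mono mult_left_mono) auto
  also have "\<dots> = int n * q * (q - 1)" using q0 by simp
  finally show ?thesis .
qed

lemma card_U: "card {1..<q} = nat (q - 1)" by simp

lemma sumsq_lower:
  fixes Sf :: "int \<Rightarrow> int" and f :: "int \<Rightarrow> int"
  assumes val: "\<And>b. b \<in> f ` {1..<q} \<Longrightarrow> Sf b ^ 2 = c"
      and fR: "f ` {1..<q} \<subseteq> {0..<q}"
  shows "int (card (f ` {1..<q})) * c \<le> (\<Sum>b\<in>{0..<q}. Sf b ^ 2)"
proof -
  have "(\<Sum>b\<in>f ` {1..<q}. Sf b ^ 2) \<le> (\<Sum>b\<in>{0..<q}. Sf b ^ 2)"
    by (rule sum_mono2[OF _ fR]) auto
  moreover have "(\<Sum>b\<in>f ` {1..<q}. Sf b ^ 2) = (\<Sum>b\<in>f ` {1..<q}. c)"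
    using val by (rule sum.cong[OF refl])
  ultimately show ?thesis by simp
qed

lemma core_i: assumes a: "\<not> q dvd a0"
  and F: "\<And>x. x \<in> {1..<q} \<Longrightarrow> Legendre x q * Legendre (x^2 + a0) q = 1"
  shows "q \<le> 5"
proof -
  define S where "S b = (\<Sum>x\<in>{1..<q}. Legendre x q * Legendre (x^2+b) q)" for b
  have up1: "(\<Sum>b\<in>{0..<q}. S b ^ 2) = (\<Sum>x\<in>{1..<q}. \<Sum>y\<in>{1..<q}.
       Legendre x q * Legendre y q * (if [x^2 = y^2] (mod q) then q - 1 else -1))"
  proof -
    have "(\<Sum>b\<in>{0..<q}. S b ^ 2) = (\<Sum>b\<in>{0..<q}. \<Sum>x\<in>{1..<q}. \<Sum>y\<in>{1..<q}.
        (Legendre x q * Legendre (x^2+b) q) * (Legendre y q * Legendre (y^2+b) q))"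
      unfolding S_def power2_eq_square by (simp add: sum_product)
    also have "\<dots> = (\<Sum>x\<in>{1..<q}. \<Sum>y\<in>{1..<q}. \<Sum>b\<in>{0..<q}.
        (Legendre x q * Legendre (x^2+b) q) * (Legendre y q * Legendre (y^2+b) q))"
      by (subst sum.swap) (simp add: sum.swap[of _ "{0..<q}"])
    also have "\<dots> = (\<Sum>x\<in>{1..<q}. \<Sum>y\<in>{1..<q}.
       Legendre x q * Legendre y q * (\<Sum>b\<in>{0..<q}. Legendre ((b + x^2) * (b + y^2)) q))"
      by (simp add: sum_distrib_left leg_mult ac_simps)
    also have "\<dots> = (\<Sum>x\<in>{1..<q}. \<Sum>y\<in>{1..<q}.
       Legendre x q * Legendre y q * (if [x^2 = y^2] (mod q) then q - 1 else -1))"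
      by (simp only: sum_L7)
    finally show ?thesis .
  qed
  have split: "(\<Sum>x\<in>{1..<q}. \<Sum>y\<in>{1..<q}.
       Legendre x q * Legendre y q * (if [x^2 = y^2] (mod q) then q - 1 else -1))
     = (\<Sum>x\<in>{1..<q}. \<Sum>y\<in>{1..<q}. (Legendre x q * Legendre y q) * (if [x^2 = y^2] (mod q) then q else 0))
       - (\<Sum>x\<in>{1..<q}. Legendre x q) * (\<Sum>y\<in>{1..<q}. Legendre y q)"
  proof -
    have "(\<Sum>x\<in>{1..<q}. \<Sum>y\<in>{1..<q}.
       Legendre x q * Legendre y q * (if [x^2 = y^2] (mod q) then q - 1 else -1))
      = (\<Sum>x\<in>{1..<q}. \<Sum>y\<in>{1..<q}. (Legendre x q * Legendre y q) * (if [x^2 = y^2] (mod q) then q else 0)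
         - Legendre x q * Legendre y q)"
      by (intro sum.cong refl) (auto simp: algebra_simps)
    also have "\<dots> = (\<Sum>x\<in>{1..<q}. \<Sum>y\<in>{1..<q}. (Legendre x q * Legendre y q) * (if [x^2 = y^2] (mod q) then q else 0))
       - (\<Sum>x\<in>{1..<q}. Legendre x q) * (\<Sum>y\<in>{1..<q}. Legendre y q)"
      by (simp only: sum_subtractf sum_product)
    finally show ?thesis .
  qed
  have w: "Legendre x q * Legendre y q \<le> 1" for x y
    using leg_vals[of x] leg_vals[of y] by auto
  have up: "(\<Sum>b\<in>{0..<q}. S b ^ 2) \<le> 2 * q * (q - 1)"
    using up1 split sum_leg_U kernel_bound[of "\<lambda>x y. Legendre x q * Legendre y q" 2, OF w] by simp
  have Sa0: "S a0 = q - 1"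
    using F q0 by (simp add: S_def)
  let ?f = "\<lambda>l. l^2*a0 mod q"
  have Sval: "S (?f l) ^ 2 = (q - 1)^2" if l: "l \<in> {1..<q}" for l
  proof -
    have lu: "\<not> q dvd l" using U_ndvd[OF l] .
    have "S (?f l) = (\<Sum>x\<in>{1..<q}. Legendre x q * Legendre (x^2 + l^2*a0) q)"
      unfolding S_def by (intro sum.cong refl arg_cong2[where f="(*)"] leg_cong) (simp add: cong_def mod_add_right_eq)
    also have "\<dots> = (\<Sum>z\<in>{1..<q}. Legendre (l*z mod q) q * Legendre ((l*z mod q)^2 + l^2*a0) q)"
      using sum.reindex_bij_betw[OF mul_bij_U[OF lu], of "\<lambda>x. Legendre x q * Legendre (x^2 + l^2*a0) q"] by simp
    also have "\<dots> = (\<Sum>z\<in>{1..<q}. Legendre l q * (Legendre z q * Legendre (z^2 + a0) q))"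
    proof (rule sum.cong[OF refl])
      fix z
      have "[(l*z mod q)^2 + l^2*a0 = (l*z)^2 + l^2*a0] (mod q)"
        by (intro cong_add cong_pow cong_refl) (simp add: cong_def)
      hence "Legendre ((l*z mod q)^2 + l^2*a0) q = Legendre (l^2 * (z^2 + a0)) q"
        using leg_cong by (simp add: algebra_simps power_mult_distrib)
      also have "\<dots> = Legendre (z^2 + a0) q" using leg_mult leg_sq[OF lu] by simp
      finally show "Legendre (l*z mod q) q * Legendre ((l*z mod q)^2 + l^2*a0) q = Legendre l q * (Legendre z q * Legendre (z^2 + a0) q)"
        by (simp add: leg_mod leg_mult)
    qed
    also have "\<dots> = Legendre l q * S a0" by (simp add: S_def sum_distrib_left)
    finally have "S (?f l) = Legendre l q * (q - 1)" using Sa0 by simp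
    moreover have "Legendre l q ^ 2 = 1" using leg_unit[OF lu] by auto
    ultimately show ?thesis by (simp add: power_mult_distrib)
  qed
  have low: "int (card (?f ` {1..<q})) * (q-1)^2 \<le> (\<Sum>b\<in>{0..<q}. S b ^ 2)"
    by (rule sumsq_lower) (use Sval mod_in_R in auto)
  have fc: "q - 1 \<le> 2 * int (card (?f ` {1..<q}))"
    using fiber_card[OF a, of 2] q0 by simp
  define C where "C = int (card (?f ` {1..<q}))"
  have h1: "C * (q-1)^2 \<le> 2 * q * (q - 1)" unfolding C_def using low up by (rule order_trans)
  have h2: "q - 1 \<le> 2 * C" using fc C_def by simp
  have "C * (q - 1) \<le> 2 * q"
  proof -
    have "(C * (q-1)) * (q - 1) \<le> (2 * q) * (q - 1)" using h1 by (simp add: power2_eq_square algebra_simps)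
    thus ?thesis using q2 by (simp add: mult_le_cancel_right)
  qed
  hence "(q - 1) * (q - 1) \<le> 4 * q"
    using h2 mult_right_mono[OF h2, of "q-1"] q2 by (simp add: algebra_simps)
  show "q \<le> 5"
  proof (rule ccontr)
    assume "\<not> q \<le> 5"
    hence "5 * (q - 1) \<le> (q - 1) * (q - 1)" using mult_right_mono[of 5 "q-1" "q-1"] by simp
    hence "5 * (q - 1) \<le> 4 * q" using \<open>(q - 1) * (q - 1) \<le> 4 * q\<close> by (rule order_trans)
    thus False using \<open>\<not> q \<le> 5\<close> by simp
  qed
qed

lemma core_ii: assumes a: "\<not> q dvd a0"
  and F: "\<And>x. x \<in> {1..<q} \<Longrightarrow> Legendre (x^6 + a0) q = 1"
  shows "q \<le> 32"
proof -
  define T where "T b = (\<Sum>x\<in>{1..<q}. Legendre (x^6+b) q)" for b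
  have up1: "(\<Sum>b\<in>{0..<q}. T b ^ 2) = (\<Sum>x\<in>{1..<q}. \<Sum>y\<in>{1..<q}.
       (if [x^6 = y^6] (mod q) then q - 1 else -1))"
  proof -
    have "(\<Sum>b\<in>{0..<q}. T b ^ 2) = (\<Sum>b\<in>{0..<q}. \<Sum>x\<in>{1..<q}. \<Sum>y\<in>{1..<q}.
        Legendre (x^6+b) q * Legendre (y^6+b) q)"
      unfolding T_def power2_eq_square by (simp add: sum_product)
    also have "\<dots> = (\<Sum>x\<in>{1..<q}. \<Sum>y\<in>{1..<q}. \<Sum>b\<in>{0..<q}.
        Legendre (x^6+b) q * Legendre (y^6+b) q)"
      by (subst sum.swap) (simp add: sum.swap[of _ "{0..<q}"])
    also have "\<dots> = (\<Sum>x\<in>{1..<q}. \<Sum>y\<in>{1..<q}. (\<Sum>b\<in>{0..<q}. Legendre ((b + x^6) * (b + y^6)) q))"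
      by (simp add: leg_mult ac_simps)
    also have "\<dots> = (\<Sum>x\<in>{1..<q}. \<Sum>y\<in>{1..<q}.
       (if [x^6 = y^6] (mod q) then q - 1 else -1))"
      by (simp only: sum_L7)
    finally show ?thesis .
  qed
  have split: "(\<Sum>x\<in>{1..<q}. \<Sum>y\<in>{1..<q}. (if [x^6 = y^6] (mod q) then q - 1 else -1))
     = (\<Sum>x\<in>{1..<q}. \<Sum>y\<in>{1..<q}. 1 * (if [x^6 = y^6] (mod q) then q else 0))
       - (\<Sum>x\<in>{1..<q}. \<Sum>y\<in>{1..<q}. 1)"
  proof -
    have "(\<Sum>x\<in>{1..<q}. \<Sum>y\<in>{1..<q}. (if [x^6 = y^6] (mod q) then q - 1 else -1))
      = (\<Sum>x\<in>{1..<q}. \<Sum>y\<in>{1..<q}. 1 * (if [x^6 = y^6] (mod q) then q else 0) - 1)"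
      by (intro sum.cong refl) auto
    also have "\<dots> = (\<Sum>x\<in>{1..<q}. \<Sum>y\<in>{1..<q}. 1 * (if [x^6 = y^6] (mod q) then q else 0))
       - (\<Sum>x\<in>{1..<q}. \<Sum>y\<in>{1..<q}. (1::int))"
      by (simp only: sum_subtractf)
    finally show ?thesis .
  qed
  have ones: "(\<Sum>x\<in>{1..<q}. \<Sum>y\<in>{1..<q}. (1::int)) = (q - 1) * (q - 1)" using q0 by simp
  have up: "(\<Sum>b\<in>{0..<q}. T b ^ 2) \<le> 6 * q * (q - 1) - (q - 1) * (q - 1)"
  proof -
    have e: "(\<Sum>b\<in>{0..<q}. T b ^ 2) = (\<Sum>x\<in>{1..<q}. \<Sum>y\<in>{1..<q}. 1 * (if [x^6 = y^6] (mod q) then q else 0)) - (q - 1) * (q - 1)"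
      using up1 split ones by simp
    have k: "(\<Sum>x\<in>{1..<q}. \<Sum>y\<in>{1..<q}. 1 * (if [x^6 = y^6] (mod q) then q else 0)) \<le> int 6 * q * (q - 1)"
      by (rule kernel_bound) auto
    show ?thesis unfolding e using k by simp
  qed
  have Ta0: "T a0 = q - 1"
    using F q0 by (simp add: T_def)
  let ?f = "\<lambda>l. l^6*a0 mod q"
  have Tval: "T (?f l) ^ 2 = (q - 1)^2" if l: "l \<in> {1..<q}" for l
  proof -
    have lu: "\<not> q dvd l" using U_ndvd[OF l] .
    have "T (?f l) = (\<Sum>x\<in>{1..<q}. Legendre (x^6 + l^6*a0) q)"
      unfolding T_def by (intro sum.cong refl leg_cong) (simp add: cong_def mod_add_right_eq)
    also have "\<dots> = (\<Sum>z\<in>{1..<q}. Legendre ((l*z mod q)^6 + l^6*a0) q)"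
      using sum.reindex_bij_betw[OF mul_bij_U[OF lu], of "\<lambda>x. Legendre (x^6 + l^6*a0) q"] by simp
    also have "\<dots> = (\<Sum>z\<in>{1..<q}. Legendre (z^6 + a0) q)"
    proof (rule sum.cong[OF refl])
      fix z
      have "[(l*z mod q)^6 + l^6*a0 = (l*z)^6 + l^6*a0] (mod q)"
        by (intro cong_add cong_pow cong_refl) (simp add: cong_def)
      hence "Legendre ((l*z mod q)^6 + l^6*a0) q = Legendre (l^(2*3) * (z^6 + a0)) q"
        using leg_cong by (simp add: algebra_simps power_mult_distrib)
      also have "\<dots> = Legendre (z^6 + a0) q" using leg_mult leg_pow_even[OF lu, of 3] by (simp del: mult_numeral_left_semiring_numeral)
      finally show "Legendre ((l*z mod q)^6 + l^6*a0) q = Legendre (z^6 + a0) q" .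
    qed
    finally have "T (?f l) = q - 1" using Ta0 by (simp add: T_def)
    thus ?thesis by simp
  qed
  have low: "int (card (?f ` {1..<q})) * (q-1)^2 \<le> (\<Sum>b\<in>{0..<q}. T b ^ 2)"
    by (rule sumsq_lower) (use Tval mod_in_R in auto)
  have fc: "q - 1 \<le> 6 * int (card (?f ` {1..<q}))"
    using fiber_card[OF a, of 6] q0 by simp
  define C where "C = int (card (?f ` {1..<q}))"
  have h1: "C * (q-1)^2 \<le> 6 * q * (q - 1) - (q - 1) * (q - 1)" unfolding C_def using low up by (rule order_trans)
  have h2: "q - 1 \<le> 6 * C" using fc C_def by simp
  have "(C + 1) * (q - 1) \<le> 6 * q"
  proof -
    have "((C + 1) * (q-1)) * (q - 1) \<le> (6 * q) * (q - 1)" using h1 by (simp add: power2_eq_square algebra_simps)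
    thus ?thesis using q2 by (simp add: mult_le_cancel_right)
  qed
  hence h3: "6 * C * (q - 1) \<le> 36 * q - 6 * (q - 1)" by (simp add: algebra_simps)
  have "(q - 1) * (q - 1) \<le> 6 * C * (q - 1)"
    using mult_right_mono[OF h2, of "q-1"] q2 by (simp add: algebra_simps)
  hence h4: "(q - 1) * (q - 1) \<le> 36 * q - 6 * (q - 1)" using h3 by (rule order_trans)
  show "q \<le> 32"
  proof (rule ccontr)
    assume "\<not> q \<le> 32"
    hence "32 * (q - 1) \<le> (q - 1) * (q - 1)" using mult_right_mono[of 32 "q-1" "q-1"] by simp
    hence "32 * (q - 1) \<le> 36 * q - 6 * (q - 1)" using h4 by (rule order_trans)
    thus False using \<open>\<not> q \<le> 32\<close> by simp
  qed
qed

lemma refute_lemma: "Legendre m q = 1 \<Longrightarrow> (m mod q) ^ nat ((q-1) div 2) mod q = 1"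
proof -
  assume "Legendre m q = 1"
  hence "[1 = m ^ nat ((q-1) div 2)] (mod q)" using euler_int[of m] by simp
  hence "m ^ nat ((q-1) div 2) mod q = 1 mod q" by (simp add: cong_def)
  thus ?thesis using q2 by (simp add: power_mod)
qed

end

definition check6 :: "int \<Rightarrow> bool" where
 "check6 q = list_all (\<lambda>r. list_ex (\<lambda>x. ((x^6+r) mod q)^nat((q-1) div 2) mod q \<noteq> 1) [1..q-1]) [1..q-1]"
definition checki :: "int \<Rightarrow> bool" where
 "checki q = list_all (\<lambda>r. (q = 5 \<and> r = 3) \<or> list_ex (\<lambda>x. ((x*(x^2+r)) mod q)^nat((q-1) div 2) mod q \<noteq> 1) [1..q-1]) [1..q-1]"
lemma c6: "list_all (\<lambda>q. q \<in> {7,13} \<or> \<not> prime q \<or> check6 q) [3..32]"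
  unfolding check6_def by code_simp
lemma ci: "checki 3 \<and> checki 5" unfolding checki_def by code_simp

theorem lemma2:
  fixes q a :: int
  assumes "prime q" and "odd q" and "\<not> q dvd a"
  shows "((q \<noteq> 5 \<or> \<not> [a = 3] (mod 5)) \<longrightarrow>
           (\<exists>x y. \<not> q dvd x \<and> [x * y = 1] (mod q) \<and> Legendre (x + a * y) q \<noteq> 1)) \<and>
         (q \<notin> {7, 13} \<longrightarrow>
           (\<exists>x. \<not> q dvd x \<and> Legendre (x ^ 6 + a) q \<noteq> 1))"
proof -
  have qp: "prime q" using assms(1) .
  have a: "\<not> q dvd a" using assms(3) .
  have q2: "q > 2"
  proof -
    have "q \<ge> 2" using qp prime_ge_2_int by blast
    moreover have "q \<noteq> 2" using assms(2) by auto
    ultimately show ?thesis by simp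
  qed
  have q0: "q > 0" using q2 by simp
  define r where "r = a mod q"
  have r: "r \<in> set [1..q-1]"
  proof -
    have "r \<noteq> 0" using a by (simp add: r_def dvd_eq_mod_eq_0)
    moreover have "0 \<le> r" "r < q" using q0 by (auto simp: r_def)
    ultimately show ?thesis by simp
  qed
  have xU: "x \<in> {1..<q}" if "x \<in> set [1..q-1]" for x using that by simp
  have P1: "(q \<noteq> 5 \<or> \<not> [a = 3] (mod 5)) \<longrightarrow>
           (\<exists>x y. \<not> q dvd x \<and> [x * y = 1] (mod q) \<and> Legendre (x + a * y) q \<noteq> 1)"
  proof (intro impI, rule ccontr)
    assume H: "q \<noteq> 5 \<or> \<not> [a = 3] (mod 5)"
      and N: "\<not> (\<exists>x y. \<not> q dvd x \<and> [x * y = 1] (mod q) \<and> Legendre (x + a * y) q \<noteq> 1)"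
    have F: "Legendre x q * Legendre (x^2 + a) q = 1" if x: "x \<in> {1..<q}" for x
    proof -
      have xu: "\<not> q dvd x" using U_ndvd[OF qp q2 x] .
      obtain y where y: "[x * y = 1] (mod q)" using unit_inv[OF qp q2 xu] by blast
      have L1: "Legendre (x + a * y) q = 1" using N xu y by blast
      have "[x + a * y = x * (x * y) + a * y] (mod q)"
        using y by (intro cong_add cong_refl) (metis cong_scalar_left cong_sym mult.right_neutral)
      hence "[x + a * y = y * (x^2 + a)] (mod q)" by (simp add: algebra_simps power2_eq_square)
      hence "Legendre y q * Legendre (x^2 + a) q = 1"
        using L1 leg_cong[OF qp q2] leg_mult[OF qp q2] by metis
      moreover have "Legendre x q * Legendre y q = 1"
        using leg_cong[OF qp q2 y] leg_mult[OF qp q2] leg_one[OF qp q2] by metis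
      moreover have "Legendre x q = 1 \<or> Legendre x q = -1" using leg_unit[OF qp q2 xu] .
      ultimately show ?thesis by auto
    qed
    have F': "Legendre (x*(x^2+r)) q = 1" if x: "x \<in> {1..<q}" for x
    proof -
      have "[x*(x^2+r) = x*(x^2+a)] (mod q)" by (intro cong_mult cong_add cong_refl) (simp add: r_def cong_def)
      thus ?thesis using F[OF x] leg_cong[OF qp q2] leg_mult[OF qp q2] by metis
    qed
    have "q \<le> 5" by (rule core_i[OF qp q2 a F])
    hence "q = 3 \<or> q = 4 \<or> q = 5" using q2 by auto
    hence q35: "q = 3 \<or> q = 5" using assms(2) by auto
    hence chk: "checki q" using ci by auto
    hence "(q = 5 \<and> r = 3) \<or> list_ex (\<lambda>x. ((x*(x^2+r)) mod q)^nat((q-1) div 2) mod q \<noteq> 1) [1..q-1]"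
      using r unfolding checki_def list_all_iff by blast
    thus False
    proof
      assume qr: "q = 5 \<and> r = 3"
      hence "a mod 5 = 3" unfolding r_def by (metis)
      hence "[a = 3] (mod 5)" by (simp add: cong_def)
      thus False using H \<open>q = 5 \<and> r = 3\<close> by simp
    next
      assume "list_ex (\<lambda>x. ((x*(x^2+r)) mod q)^nat((q-1) div 2) mod q \<noteq> 1) [1..q-1]"
      then obtain x where x: "x \<in> set [1..q-1]" and nx: "((x*(x^2+r)) mod q)^nat((q-1) div 2) mod q \<noteq> 1"
        unfolding list_ex_iff by blast
      thus False using refute_lemma[OF qp q2 F'[OF xU[OF x]]] by simp
    qed
  qed
  have P2: "q \<notin> {7, 13} \<longrightarrow> (\<exists>x. \<not> q dvd x \<and> Legendre (x ^ 6 + a) q \<noteq> 1)"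
  proof (intro impI, rule ccontr)
    assume H: "q \<notin> {7, 13}" and N: "\<not> (\<exists>x. \<not> q dvd x \<and> Legendre (x ^ 6 + a) q \<noteq> 1)"
    have F: "Legendre (x^6 + a) q = 1" if x: "x \<in> {1..<q}" for x
      using N U_ndvd[OF qp q2 x] by blast
    have F': "Legendre (x^6 + r) q = 1" if x: "x \<in> {1..<q}" for x
    proof -
      have "[x^6 + r = x^6 + a] (mod q)" by (intro cong_add cong_refl) (simp add: r_def cong_def)
      thus ?thesis using F[OF x] leg_cong[OF qp q2] by metis
    qed
    have "q \<le> 32" by (rule core_ii[OF qp q2 a F])
    hence "q \<in> {3..32}" using q2 by simp
    hence "q \<in> set [3..32]" by (simp only: set_upto)
    hence "q \<in> {7,13} \<or> \<not> prime q \<or> check6 q" using c6 unfolding list_all_iff by blast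
    hence "check6 q" using H qp by blast
    hence "list_ex (\<lambda>x. ((x^6+r) mod q)^nat((q-1) div 2) mod q \<noteq> 1) [1..q-1]"
      using r unfolding check6_def list_all_iff by blast
    then obtain x where x: "x \<in> set [1..q-1]" and nx: "((x^6+r) mod q)^nat((q-1) div 2) mod q \<noteq> 1"
      unfolding list_ex_iff by blast
    thus False using refute_lemma[OF qp q2 F'[OF xU[OF x]]] by simp
  qed
  show ?thesis using P1 P2 by blast
qed

end
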